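(* Let $\rho\ge 0$ and let $t=(\sqrt{1+8\rho}-1)/(2\rho)$ if $\rho>0$ and $t=2$ if $\rho=0$. Consider the two-dimensional Poisson regression model with interaction at $\boldsymbol{\beta}=(0,-1,-1,-\rho)^\top$ on $\mathcal{X}=[0,\infty)^2$, and let $\xi_t$ be the design assigning equal weights $1/4$ to $(0,0)$, $(2,0)$, $(0,2)$ and $(t,t)$. Then $d((x,0);\xi_t)=d((0,x);\xi_t)\le 0$ for all $x\ge 0$.
   Context: In the model, an observation at setting $\mathbf{x}=(x_1,x_2)$ is Poisson distributed with mean $\lambda(\mathbf{x})=\exp(\mathbf{f}(\mathbf{x})^\top\boldsymbol{\beta})=\exp(-x_1-x_2-\rho x_1x_2)$, where $\mathbf{f}(\mathbf{x})=(1,x_1,x_2,x_1x_2)^\top$. For a design $\xi$ with settings $\mathbf{x}_i$ and weights $w_i$ (nonnegative, summing to $1$), the information matrix is $\mathbf{M}(\xi)=\sum_i w_i\lambda(\mathbf{x}_i)\mathbf{f}(\mathbf{x}_i)\mathbf{f}(\mathbf{x}_i)^\top$, and the deduced sensitivity function is $d(\mathbf{x};\xi)=\mathbf{f}(\mathbf{x})^\top\mathbf{M}(\xi)^{-1}\mathbf{f}(\mathbf{x})/p-1/\lambda(\mathbf{x})$ with $p=4$. *)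

theory Defs
  imports "HOL-Analysis.Analysis"
begin

definition lam :: "real \<Rightarrow> real \<Rightarrow> real \<Rightarrow> real" where
  "lam \<rho> x1 x2 = exp (- x1 - x2 - \<rho> * x1 * x2)"

definition fv :: "real \<Rightarrow> real \<Rightarrow> real^4" where
  "fv x1 x2 = vector [1, x1, x2, x1 * x2]"

definition info_matrix :: "real \<Rightarrow> ((real \<times> real) \<times> real) list \<Rightarrow> real^4^4" where
  "info_matrix \<rho> \<xi> =
     (\<Sum>((x1, x2), w) \<leftarrow> \<xi>. (w * lam \<rho> x1 x2) *\<^sub>R (\<chi> i j. fv x1 x2 $ i * fv x1 x2 $ j))"

definition sens :: "real \<Rightarrow> ((real \<times> real) \<times> real) list \<Rightarrow> real \<Rightarrow> real \<Rightarrow> real" where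
  "sens \<rho> \<xi> x1 x2 =
     (fv x1 x2 \<bullet> (matrix_inv (info_matrix \<rho> \<xi>) *v fv x1 x2)) / 4 - 1 / lam \<rho> x1 x2"

definition t_of :: "real \<Rightarrow> real" where
  "t_of \<rho> = (if \<rho> > 0 then (sqrt (1 + 8 * \<rho>) - 1) / (2 * \<rho>) else 2)"

definition xi_t :: "real \<Rightarrow> ((real \<times> real) \<times> real) list" where
  "xi_t t = [((0, 0), 1/4), ((2, 0), 1/4), ((0, 2), 1/4), ((t, t), 1/4)]"

end

theory Submission imports Defs begin

lemma inv_apply:
  fixes M :: "real^'n^'n"
  assumes ker: "\<forall>z. M *v z = 0 \<longrightarrow> z = 0" and Mv: "M *v v = f"
  shows "matrix_inv M *v f = v"
proof -
  have "invertible M" using ker matrix_left_invertible_ker invertible_left_inverse by blast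
  then have "\<exists>A'. M ** A' = mat 1 \<and> A' ** M = mat 1" unfolding invertible_def .
  then have "M ** matrix_inv M = mat 1 \<and> matrix_inv M ** M = mat 1"
    unfolding matrix_inv_def by (rule someI_ex)
  then show ?thesis using Mv by (metis matrix_vector_mul_assoc matrix_vector_mul_lid)
qed

lemma outer_apply:
  fixes f z :: "real^'n"
  shows "(\<chi> i j. f $ i * f $ j) *v z = (f \<bullet> z) *\<^sub>R f"
  by (simp add: vec_eq_iff matrix_vector_mult_def inner_vec_def sum_distrib_left algebra_simps)

lemma M_apply:
  "info_matrix \<rho> (xi_t t) *v z =
     (lam \<rho> 0 0 / 4 * (fv 0 0 \<bullet> z)) *\<^sub>R fv 0 0 + (lam \<rho> 2 0 / 4 * (fv 2 0 \<bullet> z)) *\<^sub>R fv 2 0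
   + (lam \<rho> 0 2 / 4 * (fv 0 2 \<bullet> z)) *\<^sub>R fv 0 2 + (lam \<rho> t t / 4 * (fv t t \<bullet> z)) *\<^sub>R fv t t"
  unfolding info_matrix_def xi_t_def
  by (simp add: matrix_vector_mult_add_rdistrib scaleR_matrix_vector_assoc[symmetric] outer_apply)

lemma fv_nth: "fv a b $ 1 = 1" "fv a b $ 2 = a" "fv a b $ 3 = b" "fv a b $ 4 = a * b"
  by (simp_all add: fv_def vector_def)

lemma fv_inner: "fv a b \<bullet> z = z$1 + a * z$2 + b * z$3 + a*b*z$4"
  by (simp add: fv_nth inner_vec_def sum_4)

lemma v4_nth: "(vector [a,b,c,d] :: real^4) $ 1 = a" "(vector [a,b,c,d] :: real^4) $ 2 = b"
  "(vector [a,b,c,d] :: real^4) $ 3 = c" "(vector [a,b,c,d] :: real^4) $ 4 = d"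
  by (simp_all add: vector_def)

lemma lam_pos: "lam \<rho> a b > 0" by (simp add: lam_def)

lemma ker:
  assumes t: "t > 0"
  shows "\<forall>z. info_matrix \<rho> (xi_t t) *v z = 0 \<longrightarrow> z = 0"
proof (intro allI impI)
  fix z :: "real^4"
  assume h: "info_matrix \<rho> (xi_t t) *v z = 0"
  let ?q = "\<lambda>a b. lam \<rho> a b / 4 * (fv a b \<bullet> z)^2"
  have "z \<bullet> (info_matrix \<rho> (xi_t t) *v z) = ?q 0 0 + ?q 2 0 + ?q 0 2 + ?q t t"
    unfolding M_apply by (simp add: inner_add_right inner_commute power2_eq_square)
  then have s: "?q 0 0 + ?q 2 0 + ?q 0 2 + ?q t t = 0" using h by simp
  have nn: "\<And>a b. ?q a b \<ge> 0" using lam_pos by (simp add: less_imp_le)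
  have "?q 0 0 = 0" "?q 2 0 = 0" "?q 0 2 = 0" "?q t t = 0"
    using s nn[of 0 0] nn[of 2 0] nn[of 0 2] nn[of t t] by linarith+
  then have e: "fv 0 0 \<bullet> z = 0" "fv 2 0 \<bullet> z = 0" "fv 0 2 \<bullet> z = 0" "fv t t \<bullet> z = 0"
    using lam_pos[of \<rho> 0 0] lam_pos[of \<rho> 2 0] lam_pos[of \<rho> 0 2] lam_pos[of \<rho> t t] by auto
  then have "z$1 = 0" "z$2 = 0" "z$3 = 0" "t*t*z$4 = 0" by (simp_all add: fv_inner)
  then show "z = 0" using t by (simp add: vec_eq_iff forall_4)
qed

lemma sens_x0:
  assumes t: "t > 0"
  shows "sens \<rho> (xi_t t) x 0 = (1 - x/2)^2 + x^2 * exp 2 / 4 - exp x"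
proof -
  define w1 where "w1 = 4 - 2*x"
  define w2 where "w2 = 2 * x * exp 2"
  define v where "v = (vector [w1, (w2 - w1)/2, - w1/2, (- w1 - t*w2/2 + t*w1)/t^2] :: real^4)"
  have l: "lam \<rho> 0 0 = 1" "lam \<rho> 2 0 = exp (-2)" "lam \<rho> 0 2 = exp (-2)" "lam \<rho> x 0 = exp (-x)"
    by (simp_all add: lam_def)
  have i4: "fv t t \<bullet> v = 0" using t unfolding v_def fv_inner v4_nth by (simp add: field_simps power2_eq_square)
  have "info_matrix \<rho> (xi_t t) *v v = fv x 0"
    unfolding M_apply i4 using t
    by (simp add: vec_eq_iff forall_4 l fv_nth fv_inner v_def v4_nth w1_def w2_def field_simps exp_minus)
  then have "matrix_inv (info_matrix \<rho> (xi_t t)) *v fv x 0 = v"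
    using inv_apply ker[OF t] by blast
  then show ?thesis unfolding sens_def
    by (simp add: fv_inner v_def v4_nth w1_def w2_def l exp_minus field_simps power2_eq_square)
qed

lemma sens_0x:
  assumes t: "t > 0"
  shows "sens \<rho> (xi_t t) 0 x = (1 - x/2)^2 + x^2 * exp 2 / 4 - exp x"
proof -
  define w1 where "w1 = 4 - 2*x"
  define w2 where "w2 = 2 * x * exp 2"
  define v where "v = (vector [w1, - w1/2, (w2 - w1)/2, (- w1 - t*w2/2 + t*w1)/t^2] :: real^4)"
  have l: "lam \<rho> 0 0 = 1" "lam \<rho> 2 0 = exp (-2)" "lam \<rho> 0 2 = exp (-2)" "lam \<rho> 0 x = exp (-x)"
    by (simp_all add: lam_def)
  have i4: "fv t t \<bullet> v = 0" using t unfolding v_def fv_inner v4_nth by (simp add: field_simps power2_eq_square)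
  have "info_matrix \<rho> (xi_t t) *v v = fv 0 x"
    unfolding M_apply i4 using t
    by (simp add: vec_eq_iff forall_4 l fv_nth fv_inner v_def v4_nth w1_def w2_def field_simps exp_minus)
  then have "matrix_inv (info_matrix \<rho> (xi_t t)) *v fv 0 x = v"
    using inv_apply ker[OF t] by blast
  then show ?thesis unfolding sens_def
    by (simp add: fv_inner v_def v4_nth w1_def w2_def l exp_minus field_simps power2_eq_square)
qed

lemma exp_cubic: "1 + y + y^2/2 + y^3/6 \<le> exp (y::real)"
proof -
  obtain u where "exp y = (\<Sum>m<4. y ^ m / fact m) + exp u / fact 4 * y ^ 4"
    using Maclaurin_exp_le[of y 4] by blast
  moreover have "(\<Sum>m<4. y ^ m / fact m) = 1 + y + y^2/2 + y^3/6"
    by (simp add: eval_nat_numeral fact_numeral)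
  moreover have "exp u / fact 4 * y ^ 4 \<ge> 0" by (simp add: zero_le_even_power)
  ultimately show ?thesis by linarith
qed

lemma key_ineq:
  assumes x: "(x::real) \<ge> 0"
  shows "(1 - x/2)^2 + x^2 * exp 2 / 4 - exp x \<le> 0"
proof -
  define E where "E = exp (2::real)"
  have E9: "E \<le> 9"
  proof -
    have "E = exp 1 * exp 1" unfolding E_def by (simp flip: exp_add)
    also have "\<dots> \<le> 3 * 3" using exp_le by (intro mult_mono) auto
    finally show ?thesis by simp
  qed
  have E3: "E \<ge> 3" using exp_lower_Taylor_quadratic[of 2] unfolding E_def by simp
  show ?thesis
  proof (cases "x \<le> 1")
    case True
    have q: "1 + x + x^2/2 \<le> exp x" using exp_lower_Taylor_quadratic x by blast
    have "x * (E - 1) \<le> 1 * 8" using True E9 x E3 by (intro mult_mono) auto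
    then have "x * (x * (E - 1)) \<le> x * 8" using x by (simp add: mult_left_mono)
    then have "(1 - x/2)^2 + x^2 * E / 4 \<le> 1 + x + x^2/2"
      by (simp add: power2_eq_square field_simps)
    then show ?thesis using q unfolding E_def by linarith
  next
    case False
    define y where "y = x - 2"
    have ex: "exp x = E * exp y" unfolding E_def y_def by (simp flip: exp_add)
    have c: "E * (1 + y + y^2/2 + y^3/6) \<le> E * exp y"
      using exp_cubic[of y] E3 by (intro mult_left_mono) auto
    have "(E - 1)/4 + E*y/6 \<ge> (E-1)/4 - E/6"
      using False E3 unfolding y_def by (simp add: field_simps)
    moreover have "(E-1)/4 - E/6 \<ge> 0" using E3 by (simp add: field_simps)
    ultimately have nn: "(E - 1)/4 + E*y/6 \<ge> 0" by linarith
    have "E * (1 + y + y^2/2 + y^3/6) - ((1 - x/2)^2 + x^2 * E / 4) = y^2 * ((E - 1)/4 + E*y/6)"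
      unfolding y_def by (simp add: power2_eq_square power3_eq_cube field_simps)
    also have "\<dots> \<ge> 0" using nn by simp
    finally show ?thesis using c ex unfolding E_def by linarith
  qed
qed

lemma t_of_pos: assumes "\<rho> \<ge> 0" shows "t_of \<rho> > 0"
proof (cases "\<rho> > 0")
  case True
  have "sqrt (1 + 8*\<rho>) > sqrt 1" using True by (subst real_sqrt_less_iff) simp
  then show ?thesis using True unfolding t_of_def by simp
next
  case False then show ?thesis unfolding t_of_def by simp
qed

theorem lemma3:
  fixes \<rho> x :: real
  assumes "\<rho> \<ge> 0" and "x \<ge> 0"
  shows "sens \<rho> (xi_t (t_of \<rho>)) x 0 = sens \<rho> (xi_t (t_of \<rho>)) 0 x \<and>
         sens \<rho> (xi_t (t_of \<rho>)) x 0 \<le> 0"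
  using sens_x0[OF t_of_pos[OF assms(1)]] sens_0x[OF t_of_pos[OF assms(1)]] key_ineq[OF assms(2)]
  by simp

end
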